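(* Let $n\geq 3$ and $m\geq 1$ be integers. Identify $\Delta_m^{3,2}=\mathrm{VR}(\{0,\ldots,m\}^3;2)$ with the subcomplex of $\Delta_m^{n,2}=\mathrm{VR}(\{0,\ldots,m\}^n;2)$ spanned by the vertices of the form $(v_1,v_2,v_3,0,\ldots,0)$. Then there exists a retraction $\Delta_m^{n,2}\to\Delta_m^{3,2}$.
   Context: $\{0,\ldots,m\}^k\subseteq\mathbb{Z}^k$ carries the Manhattan metric $d(x,y)=\sum_i |x_i-y_i|$. For a metric space $X$ and $r\geq 0$, $\mathrm{VR}(X;r)$ is the simplicial complex on $X$ whose simplices are the finite subsets of diameter at most $r$. *)

theory Defs
  imports Main
begin

text \<open>Points of Z^k are encoded as functions nat => int that vanish at indices >= k.
  With this encoding {0..m}^3 is literally the set of points of {0..m}^n of the form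
  (v1,v2,v3,0,...,0).\<close>

definition grid :: "nat \<Rightarrow> nat \<Rightarrow> (nat \<Rightarrow> int) set" where
  "grid k m = {x. (\<forall>i<k. 0 \<le> x i \<and> x i \<le> int m) \<and> (\<forall>i\<ge>k. x i = 0)}"

definition manhattan :: "nat \<Rightarrow> (nat \<Rightarrow> int) \<Rightarrow> (nat \<Rightarrow> int) \<Rightarrow> int" where
  "manhattan k x y = (\<Sum>i<k. \<bar>x i - y i\<bar>)"

definition VR :: "'a set \<Rightarrow> ('a \<Rightarrow> 'a \<Rightarrow> int) \<Rightarrow> int \<Rightarrow> 'a set set" where
  "VR X d r = {\<sigma>. \<sigma> \<subseteq> X \<and> finite \<sigma> \<and> \<sigma> \<noteq> {} \<and> (\<forall>x\<in>\<sigma>. \<forall>y\<in>\<sigma>. d x y \<le> r)}"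

definition simplicial_map :: "'a set set \<Rightarrow> 'b set set \<Rightarrow> ('a \<Rightarrow> 'b) \<Rightarrow> bool" where
  "simplicial_map K L f \<longleftrightarrow> (\<forall>\<sigma>\<in>K. f ` \<sigma> \<in> L)"

definition simplicial_retraction :: "'a set set \<Rightarrow> 'a set set \<Rightarrow> ('a \<Rightarrow> 'a) \<Rightarrow> bool" where
  "simplicial_retraction K L f \<longleftrightarrow>
     L \<subseteq> K \<and> simplicial_map K L f \<and> (\<forall>v\<in>\<Union>L. f v = v)"

end

theory Submission
  imports Defs
begin

definition proj3 :: "(nat \<Rightarrow> int) \<Rightarrow> (nat \<Rightarrow> int)" where
  "proj3 x = (\<lambda>i. if i < 3 then x i else 0)"

lemma man_split:
  assumes "n \<ge> 3"
  shows "manhattan n x y = manhattan 3 x y + (\<Sum>i\<in>{3..<n}. \<bar>x i - y i\<bar>)"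
proof -
  have "{..<n} = {..<3} \<union> {3..<n}" using assms by auto
  then show ?thesis unfolding manhattan_def
    by (simp add: sum.union_disjoint[of "{..<3}" "{3..<n}"] ivl_disj_int)
qed

lemma man_le:
  assumes "n \<ge> 3"
  shows "manhattan 3 x y \<le> manhattan n x y"
proof -
  have "0 \<le> (\<Sum>i\<in>{3..<n}. \<bar>x i - y i\<bar>)" by (rule sum_nonneg) simp
  then show ?thesis using man_split[OF assms] by simp
qed

lemma man_proj: "manhattan 3 (proj3 x) (proj3 y) = manhattan 3 x y"
  unfolding manhattan_def proj3_def by simp

lemma man_grid3:
  assumes "n \<ge> 3" "x \<in> grid 3 m" "y \<in> grid 3 m"
  shows "manhattan n x y = manhattan 3 x y"
proof -
  have "(\<Sum>i\<in>{3..<n}. \<bar>x i - y i\<bar>) = 0"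
    using assms(2,3) by (intro sum.neutral) (auto simp: grid_def)
  then show ?thesis using man_split[OF assms(1)] by simp
qed

theorem proposition4p12:
  fixes n m :: nat
  assumes "n \<ge> 3" and "m \<ge> 1"
  shows "\<exists>f. simplicial_retraction (VR (grid n m) (manhattan n) 2)
                                   (VR (grid 3 m) (manhattan 3) 2) f"
proof (intro exI[of _ proj3])
  have g3: "grid 3 m \<subseteq> grid n m"
  proof
    fix x assume x: "x \<in> grid 3 m"
    have "0 \<le> x i \<and> x i \<le> int m" for i
      using x by (cases "i < 3") (auto simp: grid_def)
    then show "x \<in> grid n m" using x assms(1) by (auto simp: grid_def)
  qed
  have pg: "proj3 x \<in> grid 3 m" if "x \<in> grid n m" for x
    using that assms(1) by (auto simp: grid_def proj3_def)
  have pid: "proj3 x = x" if "x \<in> grid 3 m" for x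
    using that by (auto simp: grid_def proj3_def)
  show "simplicial_retraction (VR (grid n m) (manhattan n) 2)
                                   (VR (grid 3 m) (manhattan 3) 2) proj3"
    unfolding simplicial_retraction_def simplicial_map_def
  proof (intro conjI ballI)
    show "VR (grid 3 m) (manhattan 3) 2 \<subseteq> VR (grid n m) (manhattan n) 2"
      unfolding VR_def using g3 man_grid3[OF assms(1)] by (auto simp: subset_iff) (metis subsetD)+
  next
    fix \<sigma> assume "\<sigma> \<in> VR (grid n m) (manhattan n) 2"
    then show "proj3 ` \<sigma> \<in> VR (grid 3 m) (manhattan 3) 2"
      unfolding VR_def using pg man_proj man_le[OF assms(1)]
      by (auto intro: order_trans) (meson order_trans)
  next
    fix v assume "v \<in> \<Union> (VR (grid 3 m) (manhattan 3) 2)"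
    then show "proj3 v = v" unfolding VR_def using pid by auto
  qed
qed

end
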